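(* If the bornological \(V\)-module \(M\) is torsionfree, then so is \(M'\).
   Context: Let \(V\) be a complete discrete valuation ring with uniformiser \(\pi\). A bornology on a set is a collection of subsets (called bounded) containing all finite subsets and closed under finite unions and under taking subsets. A bornological \(V\)-module is a \(V\)-module \(M\) with a bornology such that every bounded subset is contained in a bounded \(V\)-submodule. \(M\) is (bornologically) torsionfree if it is torsionfree as a \(V\)-module and \(\pi^{-1}S=\{x\in M:\pi x\in S\}\) is bounded for every bounded \(S\subseteq M\). A subset \(S\subseteq M\) is compactoid if there is a bounded \(V\)-submodule \(T\subseteq M\) with \(S\subseteq T\) such that for every \(n\in\mathbb N\) there is a finite set \(F_n\subseteq T\) with \(S\subseteq VF_n+\pi^nT\). \(M'\) denotes \(M\) with the bornology consisting of the compactoid subsets. *)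

theory Defs
  imports Complex_Main
begin

text \<open>The ring V is the whole type 'v (an integral domain); \<pi> is a uniformiser:
  nonzero, not a unit, and every nonzero element is a unit times a power of \<pi>.\<close>

definition dvr_uniformiser :: "'v::idom \<Rightarrow> bool" where
  "dvr_uniformiser \<pi> \<longleftrightarrow> \<pi> \<noteq> 0 \<and> \<not> (\<pi> dvd 1) \<and>
     (\<forall>x. x \<noteq> 0 \<longrightarrow> (\<exists>u n. u dvd 1 \<and> x = u * \<pi> ^ n))"

definition pi_adically_complete :: "'v::idom \<Rightarrow> bool" where
  "pi_adically_complete \<pi> \<longleftrightarrow>
     (\<forall>a::nat \<Rightarrow> 'v. (\<forall>n. \<pi> ^ n dvd (a (Suc n) - a n)) \<longrightarrow>
        (\<exists>l. \<forall>n. \<pi> ^ n dvd (l - a n)))"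

definition complete_dvr :: "'v::idom \<Rightarrow> bool" where
  "complete_dvr \<pi> \<longleftrightarrow> dvr_uniformiser \<pi> \<and> pi_adically_complete \<pi>"

definition bornology :: "'m set set \<Rightarrow> bool" where
  "bornology B \<longleftrightarrow> (\<forall>F. finite F \<longrightarrow> F \<in> B) \<and>
     (\<forall>S\<in>B. \<forall>T\<in>B. S \<union> T \<in> B) \<and> (\<forall>S\<in>B. \<forall>T. T \<subseteq> S \<longrightarrow> T \<in> B)"

definition born_module ::
  "('v::comm_ring_1 \<Rightarrow> 'm::ab_group_add \<Rightarrow> 'm) \<Rightarrow> 'm set set \<Rightarrow> bool" where
  "born_module scale B \<longleftrightarrow> module scale \<and> bornology B \<and>
     (\<forall>S\<in>B. \<exists>T\<in>B. module.subspace scale T \<and> S \<subseteq> T)"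

definition pi_inv :: "('v \<Rightarrow> 'm \<Rightarrow> 'm) \<Rightarrow> 'v \<Rightarrow> 'm set \<Rightarrow> 'm set" where
  "pi_inv scale \<pi> S = {x. scale \<pi> x \<in> S}"

definition torsionfree_module ::
  "('v::comm_ring_1 \<Rightarrow> 'm::ab_group_add \<Rightarrow> 'm) \<Rightarrow> bool" where
  "torsionfree_module scale \<longleftrightarrow> (\<forall>c x. c \<noteq> 0 \<longrightarrow> scale c x = 0 \<longrightarrow> x = 0)"

definition born_torsionfree ::
  "('v::comm_ring_1 \<Rightarrow> 'm::ab_group_add \<Rightarrow> 'm) \<Rightarrow> 'v \<Rightarrow> 'm set set \<Rightarrow> bool" where
  "born_torsionfree scale \<pi> B \<longleftrightarrow> torsionfree_module scale \<and>
     (\<forall>S\<in>B. pi_inv scale \<pi> S \<in> B)"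

definition compactoid ::
  "('v::comm_ring_1 \<Rightarrow> 'm::ab_group_add \<Rightarrow> 'm) \<Rightarrow> 'v \<Rightarrow> 'm set set \<Rightarrow> 'm set \<Rightarrow> bool" where
  "compactoid scale \<pi> B S \<longleftrightarrow>
     (\<exists>T. T \<in> B \<and> module.subspace scale T \<and> S \<subseteq> T \<and>
        (\<forall>n::nat. \<exists>F. finite F \<and> F \<subseteq> T \<and>
           S \<subseteq> {a + b | a b. a \<in> module.span scale F \<and> b \<in> scale (\<pi> ^ n) ` T}))"

text \<open>The bornology of M': the compactoid subsets.\<close>
definition compactoid_bornology ::
  "('v::comm_ring_1 \<Rightarrow> 'm::ab_group_add \<Rightarrow> 'm) \<Rightarrow> 'v \<Rightarrow> 'm set set \<Rightarrow> 'm set set" where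
  "compactoid_bornology scale \<pi> B = {S. compactoid scale \<pi> B S}"

end

theory Submission
  imports Defs
begin

context
  fixes scale :: "'v::idom \<Rightarrow> 'm::ab_group_add \<Rightarrow> 'm"
  assumes M: "module scale"
begin

interpretation module scale by (rule M)

lemma unit_step:
  fixes \<pi> :: 'v
  assumes U: "dvr_uniformiser \<pi>" and N: "subspace N" and y: "y \<in> N"
    and yk: "y - scale k f \<in> span F0" and k: "k \<noteq> 0"
  shows "\<exists>j u. (\<exists>y'\<in>N. y' - scale (\<pi>^j) f \<in> span F0) \<and> k = u * \<pi>^j"
proof -
  from U k obtain u j where u: "u dvd 1" and kj: "k = u * \<pi>^j"
    unfolding dvr_uniformiser_def by blast
  from u obtain v where v: "1 = u * v" by (auto elim: dvdE)
  have "scale v y \<in> N" using N y subspace_scale by blast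
  moreover have "scale v y - scale (\<pi>^j) f = scale v (y - scale k f)"
  proof -
    have "v * k = \<pi>^j" using kj v by (metis mult.assoc mult.commute mult_1)
    then show ?thesis by (simp add: scale_right_diff_distrib)
  qed
  moreover have "scale v (y - scale k f) \<in> span F0" using yk span_scale by blast
  ultimately show ?thesis using kj by metis
qed

lemma fg_sub:
  fixes \<pi> :: 'v
  assumes U: "dvr_uniformiser \<pi>" and F: "finite F"
  shows "subspace N \<Longrightarrow> N \<subseteq> span F \<Longrightarrow> \<exists>G. finite G \<and> G \<subseteq> N \<and> N \<subseteq> span G"
  using F
proof (induction F arbitrary: N rule: finite_induct)
  case empty
  then show ?case by (intro exI[of _ "{}"]) auto
next
  case (insert f F0 N)
  have sub': "subspace (N \<inter> span F0)" using insert.prems subspace_inter by blast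
  from insert.IH[OF sub'] obtain G' where G': "finite G'" "G' \<subseteq> N \<inter> span F0"
    "N \<inter> span F0 \<subseteq> span G'" by blast
  have dec: "\<exists>k. y - scale k f \<in> span F0" if "y \<in> N" for y
    using that insert.prems span_breakdown_eq by blast
  show ?case
  proof (cases "\<exists>m. \<exists>y'\<in>N. y' - scale (\<pi>^m) f \<in> span F0")
    case False
    note nP = False
    have "N \<subseteq> span F0"
    proof
      fix y assume y: "y \<in> N"
      then obtain k where k: "y - scale k f \<in> span F0" using dec by blast
      show "y \<in> span F0"
      proof (cases "k = 0")
        case True then show ?thesis using k by simp
      next
        case False
        with unit_step[OF U insert.prems(1) y k] nP show ?thesis by blast
      qed
    qed
    then show ?thesis using G' by (intro exI[of _ G']) auto
  next
    case True
    define P where "P = (\<lambda>m. \<exists>y'\<in>N. y' - scale (\<pi>^m) f \<in> span F0)"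
    define m where "m = (LEAST m. P m)"
    have Pm: "P m" unfolding m_def using True P_def by (metis LeastI_ex)
    then obtain y0 where y0: "y0 \<in> N" "y0 - scale (\<pi>^m) f \<in> span F0" unfolding P_def by blast
    have "N \<subseteq> span (insert y0 G')"
    proof
      fix y assume y: "y \<in> N"
      then obtain k where k: "y - scale k f \<in> span F0" using dec by blast
      show "y \<in> span (insert y0 G')"
      proof (cases "k = 0")
        case True
        then have "y \<in> N \<inter> span F0" using k y by simp
        then show ?thesis using G' span_mono[of G' "insert y0 G'"] by blast
      next
        case False
        from unit_step[OF U insert.prems(1) y k False] obtain j u where
          Pj: "P j" and kj: "k = u * \<pi>^j" unfolding P_def by blast
        have "m \<le> j" unfolding m_def using Pj by (rule Least_le)
        define e where "e = u * \<pi>^(j - m)"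
        have ek: "e * \<pi>^m = k" using \<open>m \<le> j\<close> kj unfolding e_def
          by (metis le_add_diff_inverse2 mult.assoc power_add)
        define z where "z = y - scale e y0"
        have zN: "z \<in> N" unfolding z_def using y y0 insert.prems(1)
          by (meson subspace_diff subspace_scale)
        have "z = (y - scale k f) - scale e (y0 - scale (\<pi>^m) f)"
          unfolding z_def using ek by (simp add: scale_right_diff_distrib)
        then have "z \<in> span F0" using k y0 by (metis span_diff span_scale)
        then have "z \<in> span G'" using zN G' by blast
        then have "z \<in> span (insert y0 G')" using span_mono[of G' "insert y0 G'"] by blast
        moreover have "scale e y0 \<in> span (insert y0 G')" by (simp add: span_base span_scale)
        ultimately have "z + scale e y0 \<in> span (insert y0 G')" by (rule span_add)
        then show ?thesis unfolding z_def by simp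
      qed
    qed
    then show ?thesis using G' y0 by (intro exI[of _ "insert y0 G'"]) auto
  qed
qed

end

theorem lemma4p2:
  fixes scale :: "'v::idom \<Rightarrow> 'm::ab_group_add \<Rightarrow> 'm"
    and \<pi> :: 'v and B :: "'m set set"
  assumes "complete_dvr \<pi>"
    and "born_module scale B"
    and "born_torsionfree scale \<pi> B"
  shows "born_torsionfree scale \<pi> (compactoid_bornology scale \<pi> B)"
proof -
  have M: "module scale" using assms(2) unfolding born_module_def by blast
  interpret module scale by (rule M)
  have U: "dvr_uniformiser \<pi>" using assms(1) unfolding complete_dvr_def by blast
  have tf: "torsionfree_module scale" and pinv: "\<forall>S\<in>B. pi_inv scale \<pi> S \<in> B"
    using assms(3) unfolding born_torsionfree_def by auto
  have pi0: "\<pi> \<noteq> 0" using U unfolding dvr_uniformiser_def by blast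
  have canc: "a = b" if "scale \<pi> a = scale \<pi> b" for a b
  proof -
    have "scale \<pi> (a - b) = 0" using that by (simp add: scale_right_diff_distrib)
    then show ?thesis using tf pi0 unfolding torsionfree_module_def by force
  qed
  have "compactoid scale \<pi> B (pi_inv scale \<pi> S)" if S: "compactoid scale \<pi> B S" for S
  proof -
    from S obtain T where T: "T \<in> B" "subspace T" "S \<subseteq> T"
      and appr: "\<And>n::nat. \<exists>F. finite F \<and> F \<subseteq> T \<and>
           S \<subseteq> {a + b | a b. a \<in> span F \<and> b \<in> scale (\<pi> ^ n) ` T}"
      unfolding compactoid_def by blast
    define T' where "T' = pi_inv scale \<pi> T"
    have T'B: "T' \<in> B" using pinv T unfolding T'_def by blast
    have T'sub: "subspace T'" unfolding T'_def pi_inv_def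
    proof (rule subspaceI)
      show "0 \<in> {x. scale \<pi> x \<in> T}" using T subspace_0 by simp
    next
      fix x y assume "x \<in> {x. scale \<pi> x \<in> T}" "y \<in> {x. scale \<pi> x \<in> T}"
      then show "x + y \<in> {x. scale \<pi> x \<in> T}" using T subspace_add
        by (simp add: scale_right_distrib)
    next
      fix c x assume "x \<in> {x. scale \<pi> x \<in> T}"
      then show "scale c x \<in> {x. scale \<pi> x \<in> T}" using T subspace_scale
        by (metis mem_Collect_eq scale_left_commute)
    qed
    have TT': "T \<subseteq> T'" unfolding T'_def pi_inv_def using T subspace_scale by blast
    have ST': "pi_inv scale \<pi> S \<subseteq> T'" using T unfolding T'_def pi_inv_def by blast
    have "\<exists>G. finite G \<and> G \<subseteq> T' \<and>
           pi_inv scale \<pi> S \<subseteq> {a + b | a b. a \<in> span G \<and> b \<in> scale (\<pi> ^ n) ` T'}" for n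
    proof -
      from appr[of "Suc n"] obtain F where F: "finite F" "F \<subseteq> T"
        and SF: "S \<subseteq> {a + b | a b. a \<in> span F \<and> b \<in> scale (\<pi> ^ Suc n) ` T}" by blast
      have spanFT: "span F \<subseteq> T" using F T span_minimal by blast
      define N0 where "N0 = span F \<inter> range (scale \<pi>)"
      have "subspace (range (scale \<pi>))"
      proof (rule subspaceI)
        show "0 \<in> range (scale \<pi>)" by (metis rangeI scale_zero_right)
      next
        fix x y assume "x \<in> range (scale \<pi>)" "y \<in> range (scale \<pi>)"
        then obtain a b where "x = scale \<pi> a" "y = scale \<pi> b" by blast
        then have "x + y = scale \<pi> (a + b)" by (simp add: scale_right_distrib)
        then show "x + y \<in> range (scale \<pi>)" by blast
      next
        fix c x assume "x \<in> range (scale \<pi>)"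
        then obtain a where "x = scale \<pi> a" by blast
        then have "scale c x = scale \<pi> (scale c a)" by (simp add: mult.commute)
        then show "scale c x \<in> range (scale \<pi>)" by blast
      qed
      then have "subspace N0" unfolding N0_def by (simp add: subspace_inter)
      then obtain G0 where G0: "finite G0" "G0 \<subseteq> N0" "N0 \<subseteq> span G0"
        using fg_sub[OF M U F(1)] N0_def by blast
      define h where "h = (\<lambda>g. SOME z. g = scale \<pi> z)"
      have hg: "scale \<pi> (h g) = g" if "g \<in> G0" for g
      proof -
        have "\<exists>z. g = scale \<pi> z" using that G0 N0_def by blast
        then show ?thesis unfolding h_def by (metis (mono_tags) someI_ex)
      qed
      define G where "G = h ` G0"
      have GT': "G \<subseteq> T'" unfolding G_def T'_def pi_inv_def
        using hg G0 N0_def spanFT by auto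
      have lift: "\<exists>z\<in>span G. w = scale \<pi> z" if "w \<in> span G0" for w
        using that
      proof (induction rule: span_induct_alt)
        case base
        then show ?case using span_zero by (metis scale_zero_right)
      next
        case (step c x y)
        then obtain z where z: "z \<in> span G" "y = scale \<pi> z" by blast
        have "scale c (h x) + z \<in> span G" using step(1) z(1) unfolding G_def
          by (meson imageI span_add span_base span_scale)
        moreover have "scale c x + y = scale \<pi> (scale c (h x) + z)"
          using hg[OF step(1)] z(2) by (metis scale_left_commute scale_right_distrib)
        ultimately show ?case by blast
      qed
      have "pi_inv scale \<pi> S \<subseteq> {a + b | a b. a \<in> span G \<and> b \<in> scale (\<pi> ^ n) ` T'}"
      proof
        fix x assume "x \<in> pi_inv scale \<pi> S"
        then have "scale \<pi> x \<in> S" unfolding pi_inv_def by simp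
        with SF obtain a t where a: "a \<in> span F" "t \<in> T"
          and xa: "scale \<pi> x = a + scale (\<pi> ^ Suc n) t" by blast
        define y where "y = x - scale (\<pi>^n) t"
        have "scale \<pi> y = a" unfolding y_def using xa
          by (simp add: scale_right_diff_distrib)
        then have "a \<in> N0" unfolding N0_def using a by blast
        then obtain z where z: "z \<in> span G" "a = scale \<pi> z" using lift G0 by blast
        have "y = z" using canc \<open>scale \<pi> y = a\<close> z(2) by blast
        then have "x = z + scale (\<pi>^n) t" unfolding y_def by (metis diff_add_cancel)
        moreover have "t \<in> T'" using TT' a by blast
        ultimately show "x \<in> {a + b | a b. a \<in> span G \<and> b \<in> scale (\<pi> ^ n) ` T'}"
          using z by blast
      qed
      then show ?thesis using G0 GT' unfolding G_def by blast
    qed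
    then show ?thesis unfolding compactoid_def using T'B T'sub ST' by blast
  qed
  then show ?thesis unfolding born_torsionfree_def compactoid_bornology_def using tf by auto
qed

end
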